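(* Let $\mu$ be a probability measure on $\mathbb{R}$, absolutely continuous with density $f$, whose support is not included in $(-\infty,0)$. Let $$\mathcal{H}=\Big\{\sum_{k=1}^n\alpha_kf(t_k+\cdot):n\ge1,\ \alpha_k\in\mathbb{R},\ t_k\ge0\Big\},$$ viewed as a set of functions on $[0,\infty)$. If the restriction of $f$ to $[0,\infty)$ belongs to $L^\infty([0,\infty))$ and $\mathcal{H}$ is dense in $L^\infty([0,\infty))$, then for every $g\in L^1([0,\infty))$: if $\int_0^\infty f(t+s)g(s)\,ds=0$ for all $t\ge0$, then $g=0$ almost everywhere. Moreover, whenever this last implication holds (for all $g\in L^1([0,\infty))$), the measure $\mu$ is determined on $\mathbb{R}$ by the restrictions of $\mu$ and $\mu*\mu$ to $[0,\infty)$, i.e. any probability measure $\mu_1$ on $\mathbb{R}$ with $\mu_1=\mu$ and $\mu_1*\mu_1=\mu*\mu$ on $[0,\infty)$ equals $\mu$. *)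

theory Defs
  imports "HOL-Probability.Probability"
begin

definition measure_support :: "real measure \<Rightarrow> real set" where
  "measure_support M = {x. \<forall>U. open U \<and> x \<in> U \<longrightarrow> emeasure M U > 0}"

definition Linf_on :: "real set \<Rightarrow> (real \<Rightarrow> real) \<Rightarrow> bool" where
  "Linf_on S h \<longleftrightarrow> set_borel_measurable lborel S h \<and> (\<exists>C. AE x in lborel. x \<in> S \<longrightarrow> \<bar>h x\<bar> \<le> C)"

definition transl_span :: "(real \<Rightarrow> real) \<Rightarrow> (real \<Rightarrow> real) set" where
  "transl_span f = {u. \<exists>(n::nat) (\<alpha>::nat \<Rightarrow> real) (t::nat \<Rightarrow> real). n \<ge> 1 \<and> (\<forall>k\<in>{1..n}. t k \<ge> 0)
      \<and> u = (\<lambda>s. \<Sum>k=1..n. \<alpha> k * f (t k + s))}"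

definition dense_Linf_nonneg :: "(real \<Rightarrow> real) set \<Rightarrow> bool" where
  "dense_Linf_nonneg H \<longleftrightarrow> (\<forall>h. Linf_on {0..} h \<longrightarrow>
      (\<forall>\<epsilon>>0. \<exists>u\<in>H. AE x in lborel. x \<in> {0..} \<longrightarrow> \<bar>h x - u x\<bar> \<le> \<epsilon>))"

end

theory Submission
  imports Defs
begin


lemma agree_nn:
  fixes N M :: "real measure"
  assumes N: "sets N = sets borel" and Ms: "sets M = sets borel"
    and agr: "\<forall>A\<in>sets borel. A \<subseteq> {0..} \<longrightarrow> emeasure N A = emeasure M A"
    and phi: "\<phi> \<in> borel_measurable borel"
  shows "(\<integral>\<^sup>+x. indicator {0..} x * \<phi> x \<partial>N) = (\<integral>\<^sup>+x. indicator {0..} x * \<phi> x \<partial>M)"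
proof -
  have eq: "density N (indicator {0..}) = density M (indicator {0..})"
  proof (rule measure_eqI)
    show "sets (density N (indicator {0..})) = sets (density M (indicator {0..}))"
      using N Ms by simp
    fix A assume "A \<in> sets (density N (indicator {0..}))"
    then have A: "A \<in> sets borel" using N by simp
    have "emeasure (density N (indicator {0..})) A = emeasure N ({0..} \<inter> A)"
      using A N by (intro emeasure_restricted) auto
    also have "\<dots> = emeasure M ({0..} \<inter> A)" using agr A by auto
    also have "\<dots> = emeasure (density M (indicator {0..})) A"
      using A Ms by (intro emeasure_restricted[symmetric]) auto
    finally show "emeasure (density N (indicator {0..})) A = emeasure (density M (indicator {0..})) A" .
  qed
  have phiN: "\<phi> \<in> borel_measurable N" by (subst measurable_cong_sets[OF N refl]) (rule phi)
  have phiM: "\<phi> \<in> borel_measurable M" by (subst measurable_cong_sets[OF Ms refl]) (rule phi)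
  have iN: "indicator {0..} \<in> borel_measurable N" by (subst measurable_cong_sets[OF N refl]) simp
  have iM: "indicator {0..} \<in> borel_measurable M" by (subst measurable_cong_sets[OF Ms refl]) simp
  have "(\<integral>\<^sup>+x. indicator {0..} x * \<phi> x \<partial>N) = (\<integral>\<^sup>+x. \<phi> x \<partial>density N (indicator {0..}))"
    by (rule nn_integral_density[OF iN phiN, symmetric])
  also have "\<dots> = (\<integral>\<^sup>+x. \<phi> x \<partial>density M (indicator {0..}))" using eq by simp
  also have "\<dots> = (\<integral>\<^sup>+x. indicator {0..} x * \<phi> x \<partial>M)"
    by (rule nn_integral_density[OF iM phiM])
  finally show ?thesis .
qed

lemma conv_decomp:
  fixes N M :: "real measure"
  assumes Nf: "finite_measure N" and Ns: "sets N = sets borel"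
    and Mf: "finite_measure M" and Ms: "sets M = sets borel"
    and agr: "\<forall>A\<in>sets borel. A \<subseteq> {0..} \<longrightarrow> emeasure N A = emeasure M A"
    and A: "A \<in> sets borel" and A0: "A \<subseteq> {0..}"
  shows "emeasure (N \<star> N) A =
    2 * (\<integral>\<^sup>+x. indicator {..<0} x * (\<integral>\<^sup>+y. indicator {0..} y * indicator A (x+y) \<partial>M) \<partial>N)
    + (\<integral>\<^sup>+x. indicator {0..} x * (\<integral>\<^sup>+y. indicator {0..} y * indicator A (x+y) \<partial>M) \<partial>M)"
proof -
  interpret N: finite_measure N by fact
  interpret M: finite_measure M by fact
  interpret NN: pair_sigma_finite N N
    unfolding pair_sigma_finite_def using N.sigma_finite_measure by simp
  note [measurable_cong] = Ns Ms
  note [measurable] = A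
  define K where "K x = (\<integral>\<^sup>+y. indicator {0..} y * indicator A (x+y) \<partial>M)" for x
  define Oo where "Oo x = (\<integral>\<^sup>+y. indicator {..<0} y * indicator A (x+y) \<partial>N)" for x
  have Km[measurable]: "K \<in> borel_measurable borel"
    unfolding K_def by (rule M.borel_measurable_nn_integral) measurable
  have Om[measurable]: "Oo \<in> borel_measurable borel"
    unfolding Oo_def by (rule N.borel_measurable_nn_integral) measurable
  have KN: "(\<integral>\<^sup>+y. indicator {0..} y * indicator A (x+y) \<partial>N) = K x" for x
    unfolding K_def by (rule agree_nn[OF Ns Ms agr]) measurable
  have inner: "(\<integral>\<^sup>+y. indicator A (x+y) \<partial>N) = Oo x + K x" for x
  proof -
    have "(\<integral>\<^sup>+y. indicator A (x+y) \<partial>N) = (\<integral>\<^sup>+y. indicator {..<0} y * indicator A (x+y) + indicator {0..} y * indicator A (x+y) \<partial>N)"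
      by (intro nn_integral_cong) (auto split: split_indicator)
    also have "\<dots> = Oo x + (\<integral>\<^sup>+y. indicator {0..} y * indicator A (x+y) \<partial>N)"
      unfolding Oo_def by (rule nn_integral_add) measurable
    finally show ?thesis using KN by simp
  qed
  have O0: "Oo x = 0" if "x < 0" for x
  proof -
    have "(\<integral>\<^sup>+y. indicator {..<0} y * indicator A (x+y) \<partial>N) = (\<integral>\<^sup>+y. 0 \<partial>N)"
      using that A0 by (intro nn_integral_cong) (auto split: split_indicator)
    then show ?thesis by (simp add: Oo_def)
  qed
  have "emeasure (N \<star> N) A = (\<integral>\<^sup>+x. \<integral>\<^sup>+y. indicator A (x + y) \<partial>N \<partial>N)"
    by (rule convolution_emeasure'[OF A Nf Nf Ns Ns])
  also have "\<dots> = (\<integral>\<^sup>+x. Oo x + K x \<partial>N)" by (simp add: inner)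
  also have "\<dots> = (\<integral>\<^sup>+x. indicator {..<0} x * K x + (indicator {0..} x * Oo x + indicator {0..} x * K x) \<partial>N)"
    by (intro nn_integral_cong) (auto split: split_indicator simp: O0)
  also have "\<dots> = (\<integral>\<^sup>+x. indicator {..<0} x * K x \<partial>N) + ((\<integral>\<^sup>+x. indicator {0..} x * Oo x \<partial>N) + (\<integral>\<^sup>+x. indicator {0..} x * K x \<partial>N))"
    by (subst nn_integral_add; (subst nn_integral_add)?) measurable
  also have "(\<integral>\<^sup>+x. indicator {0..} x * K x \<partial>N) = (\<integral>\<^sup>+x. indicator {0..} x * K x \<partial>M)"
    by (rule agree_nn[OF Ns Ms agr Km])
  also have "(\<integral>\<^sup>+x. indicator {0..} x * Oo x \<partial>N) = (\<integral>\<^sup>+x. indicator {..<0} x * K x \<partial>N)"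
  proof -
    have "(\<integral>\<^sup>+x. indicator {0..} x * Oo x \<partial>N) = (\<integral>\<^sup>+x. \<integral>\<^sup>+y. indicator {0..} x * (indicator {..<0} y * indicator A (x+y)) \<partial>N \<partial>N)"
      unfolding Oo_def by (intro nn_integral_cong nn_integral_cmult[symmetric]) measurable
    also have "\<dots> = (\<integral>\<^sup>+y. \<integral>\<^sup>+x. indicator {0..} x * (indicator {..<0} y * indicator A (x+y)) \<partial>N \<partial>N)"
      by (rule NN.Fubini'[symmetric]) measurable
    also have "\<dots> = (\<integral>\<^sup>+y. indicator {..<0} y * (\<integral>\<^sup>+x. indicator {0..} x * indicator A (y+x) \<partial>N) \<partial>N)"
      by (intro nn_integral_cong, subst nn_integral_cmult[symmetric]) (auto intro!: nn_integral_cong simp: ac_simps)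
    also have "\<dots> = (\<integral>\<^sup>+y. indicator {..<0} y * K y \<partial>N)" by (simp add: KN)
    finally show ?thesis .
  qed
  finally show ?thesis unfolding K_def by (simp add: mult_2 add.assoc)
qed

lemma K_formula:
  fixes f :: "real \<Rightarrow> real"
  assumes f_meas[measurable]: "f \<in> borel_measurable borel" and x: "x < 0" and t: "t \<ge> 0"
  shows "(\<integral>\<^sup>+y. indicator {0..} y * indicator {t<..t+\<delta>} (x+y) \<partial>density lborel (\<lambda>x. ennreal (f x)))
    = (\<integral>\<^sup>+s. (if -x < s \<and> s \<le> \<delta> - x then ennreal (f (t+s)) else 0) \<partial>lborel)"
proof -
  have "(\<integral>\<^sup>+y. indicator {0..} y * indicator {t<..t+\<delta>} (x+y) \<partial>density lborel (\<lambda>x. ennreal (f x)))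
      = (\<integral>\<^sup>+y. ennreal (f y) * (indicator {0..} y * indicator {t<..t+\<delta>} (x+y)) \<partial>lborel)"
    by (rule nn_integral_density) measurable
  also have "\<dots> = (\<integral>\<^sup>+s. ennreal (f (t + 1 * s)) * (indicator {0..} (t + 1 * s) * indicator {t<..t+\<delta>} (x+(t + 1 * s))) \<partial>lborel)"
    using nn_integral_real_affine[where f="\<lambda>y. ennreal (f y) * (indicator {0..} y * indicator {t<..t+\<delta>} (x+y))" and c=1 and t=t]
    by simp
  also have "\<dots> = (\<integral>\<^sup>+s. (if -x < s \<and> s \<le> \<delta> - x then ennreal (f (t+s)) else 0) \<partial>lborel)"
    using x t by (intro nn_integral_cong) (auto split: split_indicator)
  finally show ?thesis .
qed

lemma C_formula:
  fixes f :: "real \<Rightarrow> real" and N :: "real measure"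
  assumes Nf: "finite_measure N" and Ns: "sets N = sets borel"
    and f_meas[measurable]: "f \<in> borel_measurable borel" and t: "t \<ge> 0"
  shows "(\<integral>\<^sup>+x. indicator {..<0} x * (\<integral>\<^sup>+y. indicator {0..} y * indicator {t<..t+\<delta>} (x+y) \<partial>density lborel (\<lambda>x. ennreal (f x))) \<partial>N)
    = (\<integral>\<^sup>+s. ennreal (f (t+s)) * emeasure N ({..<0} \<inter> {-s<..\<delta>-s}) \<partial>lborel)"
proof -
  interpret N: finite_measure N by fact
  interpret P: pair_sigma_finite N lborel
    unfolding pair_sigma_finite_def using N.sigma_finite_measure lborel.sigma_finite_measure_axioms by simp
  note [measurable_cong] = Ns
  have "(\<integral>\<^sup>+x. indicator {..<0} x * (\<integral>\<^sup>+y. indicator {0..} y * indicator {t<..t+\<delta>} (x+y) \<partial>density lborel (\<lambda>x. ennreal (f x))) \<partial>N)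
     = (\<integral>\<^sup>+x. \<integral>\<^sup>+s. (if x < 0 \<and> -x < s \<and> s \<le> \<delta> - x then ennreal (f (t+s)) else 0) \<partial>lborel \<partial>N)"
  proof (intro nn_integral_cong)
    fix x show "indicator {..<0} x * (\<integral>\<^sup>+y. indicator {0..} y * indicator {t<..t+\<delta>} (x+y) \<partial>density lborel (\<lambda>x. ennreal (f x)))
      = (\<integral>\<^sup>+s. (if x < 0 \<and> -x < s \<and> s \<le> \<delta> - x then ennreal (f (t+s)) else 0) \<partial>lborel)"
    proof (cases "x < 0")
      case True
      then show ?thesis using K_formula[OF f_meas True t] by simp
    qed simp
  qed
  also have "\<dots> = (\<integral>\<^sup>+s. \<integral>\<^sup>+x. (if x < 0 \<and> -x < s \<and> s \<le> \<delta> - x then ennreal (f (t+s)) else 0) \<partial>N \<partial>lborel)"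
    by (rule P.Fubini'[symmetric]) measurable
  also have "\<dots> = (\<integral>\<^sup>+s. \<integral>\<^sup>+x. ennreal (f (t+s)) * indicator ({..<0} \<inter> {-s<..\<delta>-s}) x \<partial>N \<partial>lborel)"
    by (intro nn_integral_cong) (auto split: split_indicator)
  also have "\<dots> = (\<integral>\<^sup>+s. ennreal (f (t+s)) * emeasure N ({..<0} \<inter> {-s<..\<delta>-s}) \<partial>lborel)"
    using Ns by (intro nn_integral_cong nn_integral_cmult_indicator) auto
  finally show ?thesis .
qed

lemma H_meas:
  fixes N :: "real measure"
  assumes Nf: "finite_measure N" and Ns: "sets N = sets borel"
  shows "(\<lambda>s. emeasure N ({..<0} \<inter> {-s<..\<delta>-s})) \<in> borel_measurable borel"
proof -
  interpret N: finite_measure N by fact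
  note [measurable_cong] = Ns
  have "(\<lambda>s. emeasure N ({..<0} \<inter> {-s<..\<delta>-s})) = (\<lambda>s. \<integral>\<^sup>+x. (if x < 0 \<and> -s < x \<and> x \<le> \<delta> - s then 1 else 0) \<partial>N)"
  proof
    fix s
    have "emeasure N ({..<0} \<inter> {-s<..\<delta>-s}) = (\<integral>\<^sup>+x. indicator ({..<0} \<inter> {-s<..\<delta>-s}) x \<partial>N)"
      using Ns by (subst nn_integral_indicator) auto
    also have "\<dots> = (\<integral>\<^sup>+x. (if x < 0 \<and> -s < x \<and> x \<le> \<delta> - s then 1 else 0) \<partial>N)"
      by (intro nn_integral_cong) (auto split: split_indicator)
    finally show "emeasure N ({..<0} \<inter> {-s<..\<delta>-s}) = (\<integral>\<^sup>+x. (if x < 0 \<and> -s < x \<and> x \<le> \<delta> - s then 1 else 0) \<partial>N)" .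
  qed
  also have "\<dots> \<in> borel_measurable borel"
    by (rule N.borel_measurable_nn_integral) measurable
  finally show ?thesis .
qed

lemma H_int:
  fixes N :: "real measure"
  assumes Nd: "real_distribution N" and d: "\<delta> \<ge> 0"
  shows "integrable lborel (\<lambda>s. measure N ({..<0} \<inter> {-s<..\<delta>-s}))"
proof -
  interpret N: real_distribution N by fact
  interpret P: pair_sigma_finite N lborel
    unfolding pair_sigma_finite_def using N.sigma_finite_measure lborel.sigma_finite_measure_axioms by simp
  have em: "(\<lambda>s. emeasure N ({..<0} \<inter> {-s<..\<delta>-s})) \<in> borel_measurable borel"
    by (rule H_meas) (auto simp: N.finite_measure_axioms)
  have mm: "(\<lambda>s. measure N ({..<0} \<inter> {-s<..\<delta>-s})) \<in> borel_measurable borel"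
    unfolding measure_def by (rule borel_measurable_enn2real[OF em])
  have "(\<integral>\<^sup>+s. ennreal (measure N ({..<0} \<inter> {-s<..\<delta>-s})) \<partial>lborel)
      = (\<integral>\<^sup>+s. \<integral>\<^sup>+x. (if x < 0 \<and> -s < x \<and> x \<le> \<delta> - s then 1 else 0) \<partial>N \<partial>lborel)"
  proof (intro nn_integral_cong)
    fix s
    have "ennreal (measure N ({..<0} \<inter> {-s<..\<delta>-s})) = (\<integral>\<^sup>+x. indicator ({..<0} \<inter> {-s<..\<delta>-s}) x \<partial>N)"
      using nn_integral_indicator[of "{..<0} \<inter> {-s<..\<delta>-s}" N] by (simp add: N.emeasure_eq_measure)
    also have "\<dots> = (\<integral>\<^sup>+x. (if x < 0 \<and> -s < x \<and> x \<le> \<delta> - s then 1 else 0) \<partial>N)"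
      by (intro nn_integral_cong) (auto split: split_indicator)
    finally show "ennreal (measure N ({..<0} \<inter> {-s<..\<delta>-s})) = (\<integral>\<^sup>+x. (if x < 0 \<and> -s < x \<and> x \<le> \<delta> - s then 1 else 0) \<partial>N)" .
  qed
  also have "\<dots> = (\<integral>\<^sup>+x. \<integral>\<^sup>+s. (if x < 0 \<and> -s < x \<and> x \<le> \<delta> - s then 1 else 0) \<partial>lborel \<partial>N)"
    by (rule P.Fubini') measurable
  also have "\<dots> \<le> (\<integral>\<^sup>+x. ennreal \<delta> \<partial>N)"
  proof (intro nn_integral_mono)
    fix x
    have "(\<integral>\<^sup>+s. (if x < 0 \<and> -s < x \<and> x \<le> \<delta> - s then 1 else 0) \<partial>lborel) \<le> (\<integral>\<^sup>+s. indicator {-x<..\<delta>-x} s \<partial>lborel)"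
      by (intro nn_integral_mono) (auto split: split_indicator)
    also have "\<dots> = ennreal \<delta>" using d by simp
    finally show "(\<integral>\<^sup>+s. (if x < 0 \<and> -s < x \<and> x \<le> \<delta> - s then 1 else 0) \<partial>lborel) \<le> ennreal \<delta>" .
  qed
  also have "\<dots> < \<infinity>" using N.emeasure_space_1 by (simp add: ennreal_mult_less_top)
  finally have fin: "(\<integral>\<^sup>+s. ennreal (measure N ({..<0} \<inter> {-s<..\<delta>-s})) \<partial>lborel) < \<infinity>" .
  have mm': "(\<lambda>s. measure N ({..<0} \<inter> {-s<..\<delta>-s})) \<in> borel_measurable lborel"
    using mm by simp
  show ?thesis
    by (rule integrableI_nonneg[OF mm' _ fin]) (rule AE_I2, simp)
qed



definition Lam :: "real measure \<Rightarrow> real \<Rightarrow> real" where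
  "Lam N x = measure N ({..<0} \<inter> {..x})"

lemma Lam_rc:
  assumes Nd: "real_distribution N" and e: "\<epsilon> > 0"
  shows "\<exists>d>0. \<forall>y. a \<le> y \<and> y \<le> a + d \<longrightarrow> \<bar>Lam N y - Lam N a\<bar> < \<epsilon>"
proof (cases "a \<ge> 0")
  case True
  have eqL: "Lam N y = Lam N a" if "a \<le> y" for y
  proof -
    have "{..<0} \<inter> {..y} = {..<(0::real)} \<inter> {..a}" using True that by auto
    then show ?thesis by (simp add: Lam_def)
  qed
  show ?thesis
  proof (intro exI[of _ 1] conjI allI impI)
    fix y assume "a \<le> y \<and> y \<le> a + 1"
    then have "Lam N y = Lam N a" by (intro eqL) simp
    then show "\<bar>Lam N y - Lam N a\<bar> < \<epsilon>" using e by simp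
  qed simp
next
  case False
  interpret N: real_distribution N by fact
  have mono: "\<And>x y. x \<le> y \<Longrightarrow> cdf N x \<le> cdf N y" by (rule N.cdf_nondecreasing)
  obtain d where d: "d > 0" "cdf N (a + d) - cdf N a < \<epsilon>"
  proof -
    have "\<forall>\<epsilon>>0. \<exists>\<delta>>0. cdf N (a + \<delta>) - cdf N a < \<epsilon>"
      using N.cdf_is_right_cont[of a] by (simp only: continuous_at_right_real_increasing[OF mono])
    then show ?thesis using e that by blast
  qed
  define d' where "d' = min d (-a/2)"
  have d'0: "d' > 0" using d False by (simp add: d'_def)
  have L: "Lam N y = cdf N y" if "y < 0" for y
  proof -
    have "{..<0} \<inter> {..y} = {..y}" using that by auto
    then show ?thesis by (simp add: Lam_def cdf_def)
  qed
  show ?thesis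
  proof (intro exI[of _ d'] conjI allI impI d'0)
    fix y assume y: "a \<le> y \<and> y \<le> a + d'"
    then have "y < 0" using False d'0 by (auto simp: d'_def min_def split: if_splits)
    then have "Lam N y - Lam N a = cdf N y - cdf N a" using L False by simp
    moreover have "cdf N a \<le> cdf N y" using y by (intro mono) simp
    moreover have "cdf N y \<le> cdf N (a + d)" using y by (intro mono) (auto simp: d'_def min_def split: if_splits)
    ultimately show "\<bar>Lam N y - Lam N a\<bar> < \<epsilon>" using d by simp
  qed
qed

lemma Lam_decomp:
  assumes Nd: "real_distribution N" and d: "\<delta> \<ge> 0"
  shows "measure N ({..<0} \<inter> {-s<..\<delta>-s}) = Lam N (\<delta> - s) - Lam N (-s)"
proof -
  interpret N: real_distribution N by fact
  have "{..<0} \<inter> {-s<..\<delta>-s} = ({..<0} \<inter> {..\<delta>-s}) - ({..<0} \<inter> {..-s})" by auto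
  moreover have "{..<0} \<inter> {..-s} \<subseteq> {..<(0::real)} \<inter> {..\<delta>-s}" using d by auto
  ultimately show ?thesis unfolding Lam_def by (simp add: N.finite_measure_Diff)
qed

lemma measure_agree:
  fixes M1 M :: "real measure"
  assumes "\<forall>A\<in>sets borel. A \<subseteq> {0..} \<longrightarrow> emeasure M1 A = emeasure M A" "A \<in> sets borel" "A \<subseteq> {0..}"
  shows "measure M1 A = measure M A"
  using assms by (simp add: measure_def)

lemma part2:
  fixes M M1 :: "real measure" and f :: "real \<Rightarrow> real"
  assumes prob: "prob_space M"
    and f_meas[measurable]: "f \<in> borel_measurable borel"
    and f_nonneg: "AE x in lborel. f x \<ge> 0"
    and dens: "M = density lborel (\<lambda>x. ennreal (f x))"
    and hyp: "\<forall>g. set_integrable lborel {0..} g \<longrightarrow>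
              (\<forall>t\<ge>0. set_integrable lborel {0..} (\<lambda>s. f (t + s) * g s)
                      \<and> (LINT s:{0..}|lborel. f (t + s) * g s) = 0) \<longrightarrow>
              (AE s in lborel. s \<in> {0..} \<longrightarrow> g s = 0)"
    and M1p: "prob_space M1" and M1s: "sets M1 = sets borel"
    and E1: "\<forall>A\<in>sets borel. A \<subseteq> {0..} \<longrightarrow> emeasure M1 A = emeasure M A"
    and E2: "\<forall>A\<in>sets borel. A \<subseteq> {0..} \<longrightarrow> emeasure (M1 \<star> M1) A = emeasure (M \<star> M) A"
  shows "M1 = M"
proof -
  have Ms: "sets M = sets borel" using dens by simp
  have RD1: "real_distribution M1" using M1p M1s by (simp add: real_distribution_def real_distribution_axioms_def)
  have RD: "real_distribution M" using prob Ms by (simp add: real_distribution_def real_distribution_axioms_def)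
  interpret A1: real_distribution M1 by fact
  interpret A: real_distribution M by fact
  define S where "S \<delta> s = {..<(0::real)} \<inter> {-s<..\<delta>-s}" for \<delta> s :: real
  have nn_eq: "(\<integral>\<^sup>+s. ennreal (f (t+s)) * emeasure M1 (S \<delta> s) \<partial>lborel) = (\<integral>\<^sup>+s. ennreal (f (t+s)) * emeasure M (S \<delta> s) \<partial>lborel)"
    if t: "t \<ge> 0" for t \<delta>
  proof -
    have A: "{t<..t+\<delta>} \<in> sets borel" "{t<..t+\<delta>} \<subseteq> {0..}" using t by auto
    define a1 where "a1 = (\<integral>\<^sup>+x. indicator {..<0} x * (\<integral>\<^sup>+y. indicator {0..} y * indicator {t<..t+\<delta>} (x+y) \<partial>M) \<partial>M1)"
    define a where "a = (\<integral>\<^sup>+x. indicator {..<0} x * (\<integral>\<^sup>+y. indicator {0..} y * indicator {t<..t+\<delta>} (x+y) \<partial>M) \<partial>M)"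
    define C where "C = (\<integral>\<^sup>+x. indicator {0..} x * (\<integral>\<^sup>+y. indicator {0..} y * indicator {t<..t+\<delta>} (x+y) \<partial>M) \<partial>M)"
    have e1: "emeasure (M1 \<star> M1) {t<..t+\<delta>} = 2 * a1 + C"
      unfolding a1_def C_def by (rule conv_decomp[OF A1.finite_measure_axioms M1s A.finite_measure_axioms Ms E1 A])
    have e2: "emeasure (M \<star> M) {t<..t+\<delta>} = 2 * a + C"
      unfolding a_def C_def by (rule conv_decomp[OF A.finite_measure_axioms Ms A.finite_measure_axioms Ms _ A]) simp
    have fm: "finite_measure (M \<star> M)"
      by (rule convolution_finite[OF A.finite_measure_axioms A.finite_measure_axioms Ms Ms])
    have fin: "emeasure (M \<star> M) {t<..t+\<delta>} \<noteq> \<infinity>"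
      using finite_measure.emeasure_finite[OF fm] by simp
    have E: "emeasure (M1 \<star> M1) {t<..t+\<delta>} = emeasure (M \<star> M) {t<..t+\<delta>}" using E2 A by blast
    have eq: "2 * a1 + C = 2 * a + C" using E e1 e2 by metis
    have Cfin: "C \<noteq> \<infinity>" using fin e2 by (auto simp: top_add)
    have "2 * a1 = 2 * a" using eq Cfin by simp
    then have "a1 = a" by (simp add: ennreal_mult_cancel_left)
    then show ?thesis
      using C_formula[OF A1.finite_measure_axioms M1s f_meas t, of \<delta>, folded dens]
        C_formula[OF A.finite_measure_axioms Ms f_meas t, of \<delta>, folded dens]
      unfolding a1_def a_def S_def by simp
  qed
  define H where "H N \<delta> s = measure N (S \<delta> s)" for N \<delta> s
  have Sempty: "S \<delta> s = {}" if "s \<le> 0" for \<delta> s using that by (auto simp: S_def)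
  have Hm: "(\<lambda>s. H N \<delta> s) \<in> borel_measurable borel" if "real_distribution N" for N \<delta>
  proof -
    interpret N: real_distribution N by fact
    show ?thesis unfolding H_def measure_def S_def
      by (rule borel_measurable_enn2real[OF H_meas[OF N.finite_measure_axioms N.events_eq_borel]])
  qed
  have H01: "0 \<le> H N \<delta> s \<and> H N \<delta> s \<le> 1" if "real_distribution N" for N \<delta> s
  proof -
    interpret N: real_distribution N by fact
    show ?thesis unfolding H_def by (simp add: N.prob_le_1)
  qed
  have fpos: "AE s in lborel. 0 \<le> f (t + s)" for t
  proof -
    have "AE x in distr lborel borel ((+) t). 0 \<le> f x" using f_nonneg by (simp only: lborel_distr_plus[of t])
    then show ?thesis by (subst (asm) AE_distr_iff) auto
  qed
  have fint: "integrable lborel (\<lambda>s. f (t + s))" for t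
  proof (rule integrableI_nonneg)
    show "(\<lambda>s. f (t + s)) \<in> borel_measurable lborel" by measurable
    show "AE s in lborel. 0 \<le> f (t + s)" by (rule fpos)
    have "(\<integral>\<^sup>+s. ennreal (f (t + s)) \<partial>lborel) = (\<integral>\<^sup>+x. ennreal (f x) \<partial>lborel)"
      using nn_integral_real_affine[where f="\<lambda>x. ennreal (f x)" and c=1 and t=t] by simp
    also have "\<dots> = emeasure M (space M)" unfolding dens by (simp add: emeasure_density)
    also have "\<dots> = 1" by (rule A.emeasure_space_1)
    finally show "(\<integral>\<^sup>+s. ennreal (f (t + s)) \<partial>lborel) < \<infinity>" by simp
  qed
  have Hint: "integrable lborel (\<lambda>s. H N \<delta> s)" if "real_distribution N" "\<delta> \<ge> 0" for N \<delta>
    unfolding H_def S_def by (rule H_int[OF that])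
  have fHint: "integrable lborel (\<lambda>s. f (t + s) * H N \<delta> s)" if N: "real_distribution N" for N \<delta> t
  proof (rule Bochner_Integration.integrable_bound[OF fint])
    show "(\<lambda>s. f (t + s) * H N \<delta> s) \<in> borel_measurable lborel" using Hm[OF N] by measurable
    show "AE s in lborel. norm (f (t + s) * H N \<delta> s) \<le> norm (f (t + s))"
      using H01[OF N] by (intro AE_I2) (auto simp: abs_mult intro!: mult_left_le)
  qed
  have fHeq: "integral\<^sup>L lborel (\<lambda>s. f (t + s) * H N \<delta> s) = enn2real (\<integral>\<^sup>+s. ennreal (f (t+s)) * emeasure N (S \<delta> s) \<partial>lborel)"
    if N: "real_distribution N" for N \<delta> t
  proof -
    interpret N: real_distribution N by fact
    have "integral\<^sup>L lborel (\<lambda>s. f (t + s) * H N \<delta> s) = enn2real (\<integral>\<^sup>+s. ennreal (f (t + s) * H N \<delta> s) \<partial>lborel)"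
    proof (rule integral_eq_nn_integral)
      show "(\<lambda>s. f (t + s) * H N \<delta> s) \<in> borel_measurable lborel" using Hm[OF N] by measurable
      show "AE s in lborel. 0 \<le> f (t + s) * H N \<delta> s" using fpos[of t] by eventually_elim (use H01[OF N] in simp)
    qed
    also have "(\<integral>\<^sup>+s. ennreal (f (t + s) * H N \<delta> s) \<partial>lborel) = (\<integral>\<^sup>+s. ennreal (f (t+s)) * emeasure N (S \<delta> s) \<partial>lborel)"
      using H01[OF N] by (intro nn_integral_cong) (simp add: H_def ennreal_mult'' N.emeasure_eq_measure)
    finally show ?thesis .
  qed
  have gz: "AE s in lborel. s \<in> {0..} \<longrightarrow> H M1 \<delta> s - H M \<delta> s = 0" if d: "\<delta> > 0" for \<delta>
  proof -
    have ind: "indicator {0..} s * (H M1 \<delta> s - H M \<delta> s) = H M1 \<delta> s - H M \<delta> s" for s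
      by (cases "s \<ge> 0") (auto simp: H_def Sempty)
    have "set_integrable lborel {0..} (\<lambda>s. H M1 \<delta> s - H M \<delta> s)"
      unfolding set_integrable_def using Hint[OF RD1, of \<delta>] Hint[OF RD, of \<delta>] d by (simp add: ind)
    moreover have "\<forall>t\<ge>0. set_integrable lborel {0..} (\<lambda>s. f (t + s) * (H M1 \<delta> s - H M \<delta> s))
                      \<and> (LINT s:{0..}|lborel. f (t + s) * (H M1 \<delta> s - H M \<delta> s)) = 0"
    proof (intro allI impI conjI)
      fix t :: real assume t: "t \<ge> 0"
      have ind2: "indicator {0..} s *\<^sub>R (f (t + s) * (H M1 \<delta> s - H M \<delta> s)) = f (t + s) * H M1 \<delta> s - f (t + s) * H M \<delta> s" for s
        by (cases "s \<ge> 0") (auto simp: H_def Sempty algebra_simps)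
      show "set_integrable lborel {0..} (\<lambda>s. f (t + s) * (H M1 \<delta> s - H M \<delta> s))"
        unfolding set_integrable_def ind2 using fHint[OF RD1] fHint[OF RD] by simp
      show "(LINT s:{0..}|lborel. f (t + s) * (H M1 \<delta> s - H M \<delta> s)) = 0"
        unfolding set_lebesgue_integral_def ind2 using fHint[OF RD1] fHint[OF RD]
        by (simp add: fHeq[OF RD1] fHeq[OF RD] nn_eq[OF t])
    qed
    ultimately show ?thesis using hyp by blast
  qed
  define G where "G \<delta> s = (Lam M1 (\<delta> - s) - Lam M1 (-s)) - (Lam M (\<delta> - s) - Lam M (-s))" for \<delta> s
  have HG: "H M1 \<delta> s - H M \<delta> s = G \<delta> s" if "\<delta> \<ge> 0" for \<delta> s
    unfolding H_def S_def G_def using Lam_decomp[OF RD1 that] Lam_decomp[OF RD that] by simp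
  have Gz: "G \<delta> s = 0" if d: "\<delta> > 0" and s: "s > 0" for \<delta> s
  proof (rule ccontr)
    assume ne: "G \<delta> s \<noteq> 0"
    define c where "c = \<bar>G \<delta> s\<bar> / 4"
    have c: "c > 0" using ne by (simp add: c_def)
    obtain d1 where d1: "d1 > 0" "\<forall>y. \<delta> - s \<le> y \<and> y \<le> \<delta> - s + d1 \<longrightarrow> \<bar>Lam M1 y - Lam M1 (\<delta> - s)\<bar> < c"
      using Lam_rc[OF RD1 c] by blast
    obtain d2 where d2: "d2 > 0" "\<forall>y. - s \<le> y \<and> y \<le> - s + d2 \<longrightarrow> \<bar>Lam M1 y - Lam M1 (- s)\<bar> < c"
      using Lam_rc[OF RD1 c] by blast
    obtain d3 where d3: "d3 > 0" "\<forall>y. \<delta> - s \<le> y \<and> y \<le> \<delta> - s + d3 \<longrightarrow> \<bar>Lam M y - Lam M (\<delta> - s)\<bar> < c"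
      using Lam_rc[OF RD c] by blast
    obtain d4 where d4: "d4 > 0" "\<forall>y. - s \<le> y \<and> y \<le> - s + d4 \<longrightarrow> \<bar>Lam M y - Lam M (- s)\<bar> < c"
      using Lam_rc[OF RD c] by blast
    define e where "e = min (min d1 d2) (min (min d3 d4) s)"
    have e: "e > 0" "e \<le> d1" "e \<le> d2" "e \<le> d3" "e \<le> d4" "e \<le> s"
      using d1 d2 d3 d4 s by (auto simp: e_def)
    have nz: "G \<delta> u \<noteq> 0" if u: "s - e \<le> u" "u \<le> s" for u
    proof -
      have a1: "\<bar>Lam M1 (\<delta> - u) - Lam M1 (\<delta> - s)\<bar> < c" using d1(2)[rule_format, of "\<delta> - u"] u e by simp
      have a2: "\<bar>Lam M1 (- u) - Lam M1 (- s)\<bar> < c" using d2(2)[rule_format, of "- u"] u e by simp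
      have a3: "\<bar>Lam M (\<delta> - u) - Lam M (\<delta> - s)\<bar> < c" using d3(2)[rule_format, of "\<delta> - u"] u e by simp
      have a4: "\<bar>Lam M (- u) - Lam M (- s)\<bar> < c" using d4(2)[rule_format, of "- u"] u e by simp
      have "\<bar>G \<delta> u - G \<delta> s\<bar> < 4 * c" using a1 a2 a3 a4 unfolding G_def by linarith
      then show ?thesis unfolding c_def by linarith
    qed
    have "AE u in lborel. u \<in> {0..} \<longrightarrow> G \<delta> u = 0" using gz[OF d] HG d by simp
    then have "AE u in lborel. u \<notin> {s - e..s}"
      by eventually_elim (use nz e in force)
    then have "emeasure lborel {s - e..s} = 0"
      by (subst (asm) AE_iff_measurable[where N="{s - e..s}"]) auto
    then show False using e by simp
  qed
  have L0: "Lam M1 0 = Lam M 0"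
  proof -
    have z: "{..<0} \<inter> {..0} = {..<(0::real)}" by auto
    have c: "UNIV - {0..} = {..<(0::real)}" by auto
    have "measure M1 {0..} = measure M {0..}" by (rule measure_agree[OF E1]) auto
    moreover have "measure M1 {..<0} = 1 - measure M1 {0..}" using A1.prob_compl[of "{0..}"] c by simp
    moreover have "measure M {..<0} = 1 - measure M {0..}" using A.prob_compl[of "{0..}"] c by simp
    ultimately show ?thesis unfolding Lam_def z by simp
  qed
  have Leq: "Lam M1 x = Lam M x" for x
  proof (cases "x < 0")
    case True
    have "G (-x) (-x) = 0" using Gz True by simp
    then show ?thesis using L0 unfolding G_def by simp
  next
    case False
    have z: "{..<0} \<inter> {..x} = {..<0} \<inter> {..(0::real)}" using False by auto
    show ?thesis using L0 unfolding Lam_def z .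
  qed
  have "cdf M1 = cdf M"
  proof
    fix x
    have u: "{..x} = ({..<0} \<inter> {..x}) \<union> ({0..} \<inter> {..(x::real)})" by auto
    have "cdf M1 x = Lam M1 x + measure M1 ({0..} \<inter> {..x})"
      unfolding cdf_def Lam_def by (subst u, subst A1.finite_measure_Union) auto
    also have "\<dots> = Lam M x + measure M ({0..} \<inter> {..x})"
      using Leq measure_agree[OF E1, of "{0..} \<inter> {..x}"] by auto
    also have "\<dots> = cdf M x"
      unfolding cdf_def Lam_def by (subst u, subst A.finite_measure_Union) auto
    finally show "cdf M1 x = cdf M x" .
  qed
  then show ?thesis by (rule cdf_unique[OF RD1 RD])
qed



lemma part1:
  fixes f g :: "real \<Rightarrow> real"
  assumes dense: "dense_Linf_nonneg (transl_span f)"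
  and gi: "set_integrable lborel {0..} g"
  and ann: "\<forall>t\<ge>0. set_integrable lborel {0..} (\<lambda>s. f (t + s) * g s) \<and> (LINT s:{0..}|lborel. f (t + s) * g s) = 0"
  shows "AE s in lborel. s \<in> {0..} \<longrightarrow> g s = 0"
proof -
  define G where "G s = indicator {0..} s * g s" for s :: real
  have Gi: "integrable lborel G" using gi unfolding G_def by (simp add: set_integrable_def)
  have Gm[measurable]: "G \<in> borel_measurable lborel" using Gi by auto
  define h where "h s = sgn (g s)" for s
  have hG: "h s * G s = \<bar>G s\<bar>" for s
    unfolding h_def G_def by (cases "g s > 0"; cases "g s < 0") (auto simp: indicator_def abs_mult)
  have "Linf_on {0..} h"
  proof -
    have "(\<lambda>x. indicator {0..} x *\<^sub>R h x) = (\<lambda>x. sgn (G x))"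
      by (auto simp: h_def G_def indicator_def fun_eq_iff sgn_mult)
    moreover have "(\<lambda>x. sgn (G x)) \<in> borel_measurable lborel" by measurable
    ultimately have "set_borel_measurable lborel {0..} h" by (simp add: set_borel_measurable_def)
    moreover have "AE x in lborel. x \<in> {0..} \<longrightarrow> \<bar>h x\<bar> \<le> 1"
      by (auto simp: h_def abs_sgn_eq)
    ultimately show ?thesis unfolding Linf_on_def by blast
  qed
  then obtain u where u: "u \<in> transl_span f" and uh: "AE x in lborel. x \<in> {0..} \<longrightarrow> \<bar>h x - u x\<bar> \<le> 1/2"
  proof -
    have "\<forall>\<epsilon>>0. \<exists>u\<in>transl_span f. AE x in lborel. x \<in> {0..} \<longrightarrow> \<bar>h x - u x\<bar> \<le> \<epsilon>"
      using dense \<open>Linf_on {0..} h\<close> unfolding dense_Linf_nonneg_def by blast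
    then have "\<exists>u\<in>transl_span f. AE x in lborel. x \<in> {0..} \<longrightarrow> \<bar>h x - u x\<bar> \<le> 1/2"
      by (rule allE[where x="1/2"]) simp
    then show ?thesis using that by blast
  qed
  from u obtain n :: nat and \<alpha> :: "nat \<Rightarrow> real" and t :: "nat \<Rightarrow> real"
    where t: "\<forall>k\<in>{1..n}. t k \<ge> 0" and ud: "u = (\<lambda>s. \<Sum>k=1..n. \<alpha> k * f (t k + s))"
    unfolding transl_span_def by auto
  have uG: "u s * G s = (\<Sum>k=1..n. \<alpha> k * (indicator {0..} s * (f (t k + s) * g s)))" for s
    by (simp add: ud G_def sum_distrib_left sum_distrib_right mult_ac)
  have ki: "integrable lborel (\<lambda>s. indicator {0..} s * (f (t k + s) * g s))"
     and kz: "integral\<^sup>L lborel (\<lambda>s. indicator {0..} s * (f (t k + s) * g s)) = 0" if "k \<in> {1..n}" for k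
    using ann t that by (auto simp: set_integrable_def set_lebesgue_integral_def)
  have ui: "integrable lborel (\<lambda>s. u s * G s)"
    unfolding uG by (rule Bochner_Integration.integrable_sum[where f="\<lambda>k s. \<alpha> k * (indicator {0..} s * (f (t k + s) * g s))"]) (use ki in auto)
  have uz: "integral\<^sup>L lborel (\<lambda>s. u s * G s) = 0"
    unfolding uG using ki kz by (subst Bochner_Integration.integral_sum[where f="\<lambda>k s. \<alpha> k * (indicator {0..} s * (f (t k + s) * g s))"]) auto
  have ai: "integrable lborel (\<lambda>s. \<bar>G s\<bar>)" using Gi by auto
  have "integral\<^sup>L lborel (\<lambda>s. \<bar>G s\<bar>) = integral\<^sup>L lborel (\<lambda>s. h s * G s - u s * G s)"
    using ai ui uz by (simp add: hG)
  also have "\<dots> \<le> integral\<^sup>L lborel (\<lambda>s. 1/2 * \<bar>G s\<bar>)"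
  proof (rule integral_mono_AE)
    show "integrable lborel (\<lambda>s. h s * G s - u s * G s)" using ai ui by (simp add: hG)
    show "integrable lborel (\<lambda>s. 1/2 * \<bar>G s\<bar>)" using ai by auto
    show "AE s in lborel. h s * G s - u s * G s \<le> 1/2 * \<bar>G s\<bar>"
      using uh
    proof eventually_elim
      case (elim s)
      show ?case
      proof (cases "s \<ge> 0")
        case True
        have "h s * G s - u s * G s = (h s - u s) * G s" by (simp add: algebra_simps)
        also have "\<dots> \<le> \<bar>h s - u s\<bar> * \<bar>G s\<bar>" by (metis abs_ge_self abs_mult)
        also have "\<dots> \<le> 1/2 * \<bar>G s\<bar>" using elim True by (intro mult_right_mono) auto
        finally show ?thesis .
      qed (simp add: G_def)
    qed
  qed
  also have "\<dots> = 1/2 * integral\<^sup>L lborel (\<lambda>s. \<bar>G s\<bar>)" by simp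
  finally have "integral\<^sup>L lborel (\<lambda>s. \<bar>G s\<bar>) = 0"
    using integral_nonneg_AE[of "\<lambda>s. \<bar>G s\<bar>" lborel] by (simp add: antisym)
  then have "AE s in lborel. \<bar>G s\<bar> = 0" using ai by (subst (asm) integral_nonneg_eq_0_iff_AE) auto
  then show ?thesis by eventually_elim (auto simp: G_def)
qed

theorem proposition3p4:
  fixes M :: "real measure" and f :: "real \<Rightarrow> real"
  assumes prob: "prob_space M"
    and f_meas: "f \<in> borel_measurable borel"
    and f_nonneg: "AE x in lborel. f x \<ge> 0"
    and dens: "M = density lborel (\<lambda>x. ennreal (f x))"
    and supp: "\<not> (measure_support M \<subseteq> {..<0})"
  shows "(Linf_on {0..} f \<and> dense_Linf_nonneg (transl_span f) \<longrightarrow>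
           (\<forall>g. set_integrable lborel {0..} g \<longrightarrow>
              (\<forall>t\<ge>0. set_integrable lborel {0..} (\<lambda>s. f (t + s) * g s)
                      \<and> (LINT s:{0..}|lborel. f (t + s) * g s) = 0) \<longrightarrow>
              (AE s in lborel. s \<in> {0..} \<longrightarrow> g s = 0)))
       \<and> ((\<forall>g. set_integrable lborel {0..} g \<longrightarrow>
              (\<forall>t\<ge>0. set_integrable lborel {0..} (\<lambda>s. f (t + s) * g s)
                      \<and> (LINT s:{0..}|lborel. f (t + s) * g s) = 0) \<longrightarrow>
              (AE s in lborel. s \<in> {0..} \<longrightarrow> g s = 0))
          \<longrightarrow> (\<forall>M1 :: real measure. prob_space M1 \<and> sets M1 = sets borel
                 \<and> (\<forall>A\<in>sets borel. A \<subseteq> {0..} \<longrightarrow> emeasure M1 A = emeasure M A)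
                 \<and> (\<forall>A\<in>sets borel. A \<subseteq> {0..} \<longrightarrow> emeasure (M1 \<star> M1) A = emeasure (M \<star> M) A)
                 \<longrightarrow> M1 = M))"
  proof (intro conjI impI allI)
  fix g :: "real \<Rightarrow> real"
  assume "Linf_on {0..} f \<and> dense_Linf_nonneg (transl_span f)" "set_integrable lborel {0..} g"
    "\<forall>t\<ge>0. set_integrable lborel {0..} (\<lambda>s. f (t + s) * g s) \<and> (LINT s:{0..}|lborel. f (t + s) * g s) = 0"
  then show "AE s in lborel. s \<in> {0..} \<longrightarrow> g s = 0" by (intro part1[of f g]) auto
next
  fix M1 :: "real measure"
  assume h: "\<forall>g. set_integrable lborel {0..} g \<longrightarrow>
              (\<forall>t\<ge>0. set_integrable lborel {0..} (\<lambda>s. f (t + s) * g s)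
                      \<and> (LINT s:{0..}|lborel. f (t + s) * g s) = 0) \<longrightarrow>
              (AE s in lborel. s \<in> {0..} \<longrightarrow> g s = 0)"
    and m: "prob_space M1 \<and> sets M1 = sets borel
                 \<and> (\<forall>A\<in>sets borel. A \<subseteq> {0..} \<longrightarrow> emeasure M1 A = emeasure M A)
                 \<and> (\<forall>A\<in>sets borel. A \<subseteq> {0..} \<longrightarrow> emeasure (M1 \<star> M1) A = emeasure (M \<star> M) A)"
  show "M1 = M" using part2[OF prob f_meas f_nonneg dens h] m by blast
qed

end
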